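(* Let $X$ be a real Banach space, let $x\in S_X$ and $x^*\in S_{X^*}$ with $x^*(x)=1$. Let $(x_n^* )_{n\in\mathbb N}\subset B_{X^*}$ be a sequence such that $x^*$ is a $w^*$-cluster point of $(x_n^* )$ (every $w^*$-neighbourhood of $x^*$ contains $x_n^*$ for infinitely many $n$). Assume there is a sequence $(U_n)_{n\in\mathbb N}$ of relatively $w^*$-open subsets of $J(x)$ such that \[\bigcup_n U_n=\bigcup_n \overline{U_n}^{w^*}=J(x)\setminus\{x^*\}.\] Then there is a subsequence $(n_k)$ such that $x_{n_k}^*\to x^*$ in the $w^*$-topology as $k\to\infty$.
   Context: $B_X$, $S_X$ denote the closed unit ball and unit sphere; $J(x)=\{y^*\in S_{X^*}: y^*(x)=1\}$ for $x\in S_X$. *)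

theory Defs
  imports "HOL-Analysis.Analysis"
begin

definition weak_star :: "('a::real_normed_vector \<Rightarrow>\<^sub>L real) topology" where
  "weak_star = pullback_topology UNIV blinfun_apply
                 (product_topology (\<lambda>_. euclideanreal) UNIV)"

definition duality_set :: "'a::real_normed_vector \<Rightarrow> ('a \<Rightarrow>\<^sub>L real) set" where
  "duality_set x = {y. norm y = 1 \<and> blinfun_apply y x = 1}"

end

theory Submission
  imports Defs
begin


abbreviation PT :: "('a \<Rightarrow> real) topology" where
  "PT \<equiv> product_topology (\<lambda>_. euclideanreal) UNIV"

lemma topspace_PT[simp]: "topspace PT = UNIV"
  by (simp add: PiE_UNIV_domain)

lemma topspace_ws[simp]: "topspace (weak_star :: ('a::real_normed_vector \<Rightarrow>\<^sub>L real) topology) = UNIV"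
  by (simp add: weak_star_def topspace_pullback_topology)

lemma openin_ws: "openin (weak_star :: ('a::real_normed_vector \<Rightarrow>\<^sub>L real) topology) S \<longleftrightarrow>
   (\<exists>Q. openin PT Q \<and> S = blinfun_apply -` Q)"
  by (simp add: weak_star_def openin_pullback_topology)

lemma closedin_ws_pre:
  assumes "closedin PT C"
  shows "closedin (weak_star :: ('a::real_normed_vector \<Rightarrow>\<^sub>L real) topology) (blinfun_apply -` C)"
proof -
  have "openin PT (UNIV - C)" using assms by (simp add: closedin_def)
  then have "openin (weak_star :: ('a \<Rightarrow>\<^sub>L real) topology) (blinfun_apply -` (UNIV - C))"
    unfolding openin_ws by blast
  moreover have "blinfun_apply -` (UNIV - C) = UNIV - blinfun_apply -` C" by auto
  ultimately show ?thesis by (simp add: closedin_def)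
qed

lemma ws_regular:
  assumes "openin (weak_star :: ('a::real_normed_vector \<Rightarrow>\<^sub>L real) topology) G" "a \<in> G"
  shows "\<exists>W. openin weak_star W \<and> a \<in> W \<and> weak_star closure_of W \<subseteq> G"
proof -
  obtain Q where Q: "openin PT Q" "G = blinfun_apply -` Q" using assms(1) unfolding openin_ws by blast
  have reg: "regular_space (PT :: ('a \<Rightarrow> real) topology)"
    by (simp add: regular_space_product_topology regular_space_euclidean)
  have "closedin PT (UNIV - Q)" using Q closedin_diff[OF closedin_topspace, of PT Q] by simp
  moreover have "blinfun_apply a \<in> topspace PT - (UNIV - Q)" using Q assms by auto
  ultimately obtain W' where W': "openin PT W'" "blinfun_apply a \<in> W'"
      "disjnt (UNIV - Q) (PT closure_of W')"
    using reg \<open>closedin PT (UNIV - Q)\<close> unfolding regular_space by blast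
  define W where "W = blinfun_apply -` W'"
  have "openin weak_star W" unfolding openin_ws W_def using W' by blast
  moreover have "weak_star closure_of W \<subseteq> blinfun_apply -` (PT closure_of W')"
  proof (rule closure_of_minimal)
    have "W' \<subseteq> PT closure_of W'" by (rule closure_of_subset) simp
    then show "W \<subseteq> blinfun_apply -` (PT closure_of W')" unfolding W_def by (rule vimage_mono)
    show "closedin weak_star (blinfun_apply -` (PT closure_of W'))"
      by (rule closedin_ws_pre) simp
  qed
  ultimately show ?thesis using W' Q W_def
    by (intro exI[of _ W]) (auto simp: disjnt_def)
qed

lemma seq_choice:
  assumes "\<And>j::nat. infinite {n::nat. P j n}"
  shows "\<exists>r. strict_mono r \<and> (\<forall>j. P j (r j))"
proof -
  have "\<exists>f. \<forall>n. P n (f n) \<and> f n < f (Suc n)"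
  proof (rule dependent_nat_choice)
    show "\<exists>x. P 0 x" using assms[of 0] not_finite_existsD by blast
    fix x n :: nat assume "P n x"
    obtain y where "y > x" "P (Suc n) y"
      using assms[of "Suc n"] unfolding infinite_nat_iff_unbounded by blast
    then show "\<exists>y. P (Suc n) y \<and> x < y" by blast
  qed
  then show ?thesis by (auto simp: strict_mono_Suc_iff)
qed


lemma cluster:
  assumes "compactin X K" "infinite (S::nat set)" "\<And>k. k \<in> S \<Longrightarrow> s k \<in> K"
  shows "\<exists>y\<in>K. \<forall>Q. openin X Q \<and> y \<in> Q \<longrightarrow> infinite {k\<in>S. s k \<in> Q}"
proof (rule ccontr)
  assume "\<not> ?thesis"
  then have "\<forall>y\<in>K. \<exists>Q. openin X Q \<and> y \<in> Q \<and> finite {k\<in>S. s k \<in> Q}" by blast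
  then have "\<exists>Q. \<forall>y\<in>K. openin X (Q y) \<and> y \<in> Q y \<and> finite {k\<in>S. s k \<in> Q y}"
    by (rule bchoice)
  then obtain Q where Q: "\<And>y. y \<in> K \<Longrightarrow> openin X (Q y) \<and> y \<in> Q y \<and> finite {k\<in>S. s k \<in> Q y}"
    by blast
  have "(\<forall>U\<in>Q ` K. openin X U) \<and> K \<subseteq> \<Union>(Q ` K)" using Q by auto
  moreover have "(\<forall>U\<in>Q ` K. openin X U) \<and> K \<subseteq> \<Union>(Q ` K) \<longrightarrow> (\<exists>F. finite F \<and> F \<subseteq> Q ` K \<and> K \<subseteq> \<Union>F)"
    using assms(1) unfolding compactin_def by (rule conjunct2[THEN spec])
  ultimately have "\<exists>F. finite F \<and> F \<subseteq> Q ` K \<and> K \<subseteq> \<Union>F" by (rule mp[rotated])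
  then obtain F where F: "finite F" "F \<subseteq> Q ` K" "K \<subseteq> \<Union>F" by blast
  have "S \<subseteq> (\<Union>V\<in>F. {k\<in>S. s k \<in> V})"
  proof
    fix k assume k: "k \<in> S"
    then have "s k \<in> \<Union>F" using F(3) assms(3) by blast
    then obtain V where "V \<in> F" "s k \<in> V" by blast
    then show "k \<in> (\<Union>V\<in>F. {k\<in>S. s k \<in> V})" using k by blast
  qed
  moreover have "finite (\<Union>V\<in>F. {k\<in>S. s k \<in> V})"
  proof (rule finite_UN_I[OF F(1)])
    fix V assume "V \<in> F"
    then obtain y where "y \<in> K" "V = Q y" using F(2) by blast
    then show "finite {k\<in>S. s k \<in> V}" using Q by simp
  qed
  ultimately have "finite S" by (rule finite_subset)
  then show False using assms(2) by simp
qed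

lemma proj_cont: "continuous_map PT euclideanreal (\<lambda>g. g a)"
  using continuous_map_product_projection[of a UNIV "\<lambda>_. euclideanreal"] by simp

lemma closed_eq0:
  assumes "continuous_map PT euclideanreal F"
  shows "closedin PT {g. F g = 0}"
proof -
  have "closedin PT {g \<in> topspace PT. F g \<in> {0}}"
    by (rule closedin_continuous_map_preimage[OF assms]) simp
  moreover have "{g \<in> topspace PT. F g \<in> {0}} = {g. F g = 0}" by (simp add: PiE_UNIV_domain)
  ultimately show ?thesis by simp
qed

lemma alaoglu:
  "compactin PT (blinfun_apply ` {y::'a::real_normed_vector \<Rightarrow>\<^sub>L real. norm y \<le> 1})"
proof -
  define L1 where "L1 = \<Inter> (range (\<lambda>(a::'a,b). {g::'a\<Rightarrow>real. g (a+b) - g a - g b = 0}))"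
  define L2 where "L2 = \<Inter> (range (\<lambda>(c,a::'a). {g::'a\<Rightarrow>real. g (c *\<^sub>R a) - c * g a = 0}))"
  define B where "B = PiE UNIV (\<lambda>a::'a. cball (0::real) (norm a))"
  have cB: "compactin PT B" unfolding B_def by (simp add: compactin_PiE)
  have clB: "closedin PT B" unfolding B_def by (simp add: closedin_product_topology)
  have cl1: "closedin PT L1" unfolding L1_def
  proof (rule closedin_Inter)
    fix S assume "S \<in> range (\<lambda>(a::'a,b). {g::'a\<Rightarrow>real. g (a+b) - g a - g b = 0})"
    then obtain a b where S: "S = {g::'a\<Rightarrow>real. g (a+b) - g a - g b = 0}" by auto
    show "closedin PT S" unfolding S
      by (intro closed_eq0 continuous_map_diff proj_cont)
  qed simp
  have cl2: "closedin PT L2" unfolding L2_def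
  proof (rule closedin_Inter)
    fix S assume "S \<in> range (\<lambda>(c,a::'a). {g::'a\<Rightarrow>real. g (c *\<^sub>R a) - c * g a = 0})"
    then obtain c a where S: "S = {g::'a\<Rightarrow>real. g (c *\<^sub>R a) - c * g a = 0}" by auto
    show "closedin PT S" unfolding S
      by (intro closed_eq0 continuous_map_diff proj_cont continuous_map_real_mult_left)
  qed simp
  have eq: "blinfun_apply ` {y::'a \<Rightarrow>\<^sub>L real. norm y \<le> 1} = B \<inter> (L1 \<inter> L2)"
  proof
    show "blinfun_apply ` {y::'a \<Rightarrow>\<^sub>L real. norm y \<le> 1} \<subseteq> B \<inter> (L1 \<inter> L2)"
    proof
      fix g assume "g \<in> blinfun_apply ` {y::'a \<Rightarrow>\<^sub>L real. norm y \<le> 1}"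
      then obtain y where y: "norm y \<le> 1" "g = blinfun_apply y" by blast
      have "\<bar>g a\<bar> \<le> norm a" for a
      proof -
        have "\<bar>g a\<bar> \<le> norm y * norm a" using norm_blinfun[of y a] y by simp
        also have "\<dots> \<le> 1 * norm a" by (rule mult_right_mono) (use y in auto)
        finally show ?thesis by simp
      qed
      then have "g \<in> B" unfolding B_def by (simp add: PiE_UNIV_domain)
      moreover have "g \<in> L1" unfolding L1_def y(2) by (auto simp: blinfun.add_right)
      moreover have "g \<in> L2" unfolding L2_def y(2) by (auto simp: blinfun.scaleR_right)
      ultimately show "g \<in> B \<inter> (L1 \<inter> L2)" by blast
    qed
    show "B \<inter> (L1 \<inter> L2) \<subseteq> blinfun_apply ` {y::'a \<Rightarrow>\<^sub>L real. norm y \<le> 1}"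
    proof
      fix g assume g: "g \<in> B \<inter> (L1 \<inter> L2)"
      have add: "g (a + b) = g a + g b" for a b
      proof -
        have "g (a + b) - g a - g b = 0" using g unfolding L1_def by blast
        then show ?thesis by simp
      qed
      have sc: "g (c *\<^sub>R a) = c *\<^sub>R g a" for c a
      proof -
        have "g (c *\<^sub>R a) - c * g a = 0" using g unfolding L2_def by blast
        then show ?thesis by simp
      qed
      have bd: "norm (g a) \<le> norm a * 1" for a using g unfolding B_def by auto
      have bl: "bounded_linear g" by (rule bounded_linear_intro[OF add sc bd])
      have "norm (Blinfun g) \<le> 1"
        by (rule norm_blinfun_bound) (use bd in \<open>auto simp: bounded_linear_Blinfun_apply[OF bl]\<close>)
      moreover have "g = blinfun_apply (Blinfun g)" by (simp add: bounded_linear_Blinfun_apply[OF bl])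
      ultimately show "g \<in> blinfun_apply ` {y::'a \<Rightarrow>\<^sub>L real. norm y \<le> 1}" by blast
    qed
  qed
  show ?thesis unfolding eq
    by (rule closed_compactin[OF cB]) (use clB cl1 cl2 in auto)
qed


theorem proposition2p2:
  fixes x :: "'a::banach"
    and xs :: "'a \<Rightarrow>\<^sub>L real"
    and xn :: "nat \<Rightarrow> ('a \<Rightarrow>\<^sub>L real)"
    and U :: "nat \<Rightarrow> ('a \<Rightarrow>\<^sub>L real) set"
  assumes "norm x = 1" and "norm xs = 1" and "blinfun_apply xs x = 1"
    and "\<And>n. norm (xn n) \<le> 1"
    and "\<And>V. openin weak_star V \<Longrightarrow> xs \<in> V \<Longrightarrow> infinite {n. xn n \<in> V}"
    and "\<And>n. openin (subtopology weak_star (duality_set x)) (U n)"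
    and "(\<Union>n. U n) = duality_set x - {xs}"
    and "(\<Union>n. weak_star closure_of (U n)) = duality_set x - {xs}"
  shows "\<exists>r. strict_mono r \<and> limitin weak_star (xn \<circ> r) xs sequentially"
proof -
  note a1 = assms(1) and a3 = assms(3) and a4 = assms(4) and a5 = assms(5) and a8 = assms(8)
  define K where "K m = weak_star closure_of (U m)" for m
  have Ksub: "K m \<subseteq> duality_set x - {xs}" for m
  proof -
    have "K m \<subseteq> (\<Union>n. weak_star closure_of (U n))" unfolding K_def by blast
    then show ?thesis using a8 by simp
  qed
  have Kcl: "closedin weak_star (K m)" for m unfolding K_def by simp
  define G where "G j = (UNIV - (\<Union>(K ` {..j}))) \<inter> {y. 1 - 1 / real (Suc j) < blinfun_apply y x}" for j
  have Gopen: "openin weak_star (G j)" for j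
  proof -
    have "closedin weak_star (\<Union>(K ` {..j}))"
      by (rule closedin_Union) (use Kcl in auto)
    then have o1: "openin weak_star (UNIV - (\<Union>(K ` {..j})))"
      using openin_diff[OF openin_topspace, of weak_star "\<Union>(K ` {..j})"] by simp
    have "openin PT {g\<in>topspace PT. g x \<in> {1 - 1 / real (Suc j)<..}}"
      by (rule openin_continuous_map_preimage[OF proj_cont]) simp
    then have "openin PT {g. 1 - 1 / real (Suc j) < g x}" by simp
    moreover have "{y. 1 - 1 / real (Suc j) < blinfun_apply y x}
       = blinfun_apply -` {g. 1 - 1 / real (Suc j) < g x}" by auto
    ultimately have o2: "openin weak_star {y. 1 - 1 / real (Suc j) < blinfun_apply y x}"
      unfolding openin_ws by blast
    show ?thesis unfolding G_def by (rule openin_Int[OF o1 o2])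
  qed
  have xsG: "xs \<in> G j" for j
  proof -
    have "xs \<notin> K m" for m using Ksub[of m] by blast
    moreover have "1 - 1 / real (Suc j) < blinfun_apply xs x" using a3 by simp
    ultimately show ?thesis unfolding G_def by blast
  qed
  have "\<forall>j. \<exists>W. openin weak_star W \<and> xs \<in> W \<and> weak_star closure_of W \<subseteq> G j"
    using ws_regular[OF Gopen xsG] by blast
  then have "\<exists>W. \<forall>j. openin weak_star (W j) \<and> xs \<in> W j \<and> weak_star closure_of (W j) \<subseteq> G j"
    by (rule choice)
  then obtain W where W: "\<And>j. openin weak_star (W j)" "\<And>j. xs \<in> W j"
      "\<And>j. weak_star closure_of (W j) \<subseteq> G j" by blast
  define V where "V j = \<Inter>(W ` {..j})" for j
  have Vopen: "openin weak_star (V j)" for j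
    unfolding V_def by (rule openin_Inter) (use W(1) in auto)
  have xsV: "xs \<in> V j" for j unfolding V_def using W(2) by blast
  have Vmono: "j \<le> k \<Longrightarrow> V k \<subseteq> V j" for j k unfolding V_def by auto
  have VW: "V j \<subseteq> W j" for j unfolding V_def by auto
  have "infinite {n. xn n \<in> V j}" for j using a5[OF Vopen xsV] .
  then obtain r where r: "strict_mono r" "\<And>j. xn (r j) \<in> V j"
    using seq_choice[of "\<lambda>j n. xn n \<in> V j"] by blast
  show ?thesis
  proof (intro exI conjI)
    show "strict_mono r" by (rule r(1))
    show "limitin weak_star (xn \<circ> r) xs sequentially"
    proof (rule ccontr)
      assume nl: "\<not> limitin weak_star (xn \<circ> r) xs sequentially"
      then obtain Ob where Ob: "openin weak_star Ob" "xs \<in> Ob"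
        "\<not> (\<exists>N. \<forall>n. N \<le> n \<longrightarrow> (xn \<circ> r) n \<in> Ob)"
        unfolding limitin_sequentially by auto
      define S where "S = {k. xn (r k) \<notin> Ob}"
      have "\<forall>N. \<exists>n\<ge>N. n \<in> S" using Ob(3) unfolding S_def by auto
      then have infS: "infinite S" using infinite_nat_iff_unbounded_le by blast
      have mem: "blinfun_apply (xn (r k)) \<in> blinfun_apply ` {y. norm y \<le> 1}" for k
        using a4 by blast
      obtain g where g: "g \<in> blinfun_apply ` {y::'a \<Rightarrow>\<^sub>L real. norm y \<le> 1}"
        "\<And>Q. openin PT Q \<Longrightarrow> g \<in> Q \<Longrightarrow> infinite {k\<in>S. blinfun_apply (xn (r k)) \<in> Q}"
        using cluster[OF alaoglu infS, of "\<lambda>k. blinfun_apply (xn (r k))"] mem by blast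
      from g(1) obtain y where y0: "y \<in> {y::'a \<Rightarrow>\<^sub>L real. norm y \<le> 1}" "g = blinfun_apply y"
        by (rule imageE)
      have y: "norm y \<le> 1" "g = blinfun_apply y" using y0(1) apply simp by (rule y0(2))
      have clu: "infinite {k\<in>S. xn (r k) \<in> Q}" if "openin weak_star Q" "y \<in> Q" for Q
      proof -
        have "\<exists>Q'. openin PT Q' \<and> Q = blinfun_apply -` Q'" using that(1) by (simp only: openin_ws)
        then obtain Q' where Q'0: "openin PT Q' \<and> Q = blinfun_apply -` Q'" ..
        have Q'1: "openin PT Q'" using Q'0 by (rule conjunct1)
        have Q'2: "Q = blinfun_apply -` Q'" using Q'0 by (rule conjunct2)
        have "g \<in> Q'" using that(2) unfolding Q'2 y(2) by simp
        then have inf: "infinite {k\<in>S. blinfun_apply (xn (r k)) \<in> Q'}" by (rule g(2)[OF Q'1])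
        have "{k\<in>S. blinfun_apply (xn (r k)) \<in> Q'} = {k\<in>S. xn (r k) \<in> Q}" unfolding Q'2 by simp
        with inf show ?thesis by simp
      qed
      have yO: "y \<notin> Ob"
      proof
        assume "y \<in> Ob"
        then have "infinite {k\<in>S. xn (r k) \<in> Ob}" using clu Ob(1) by blast
        moreover have "{k\<in>S. xn (r k) \<in> Ob} = {}" unfolding S_def by blast
        ultimately show False by simp
      qed
      have yG: "y \<in> G j" for j
      proof -
        have "y \<in> weak_star closure_of (V j)"
          unfolding in_closure_of
        proof (intro conjI allI impI)
          show "y \<in> topspace weak_star" by simp
          fix T assume T: "y \<in> T \<and> openin weak_star T"
          then have "infinite {k\<in>S. xn (r k) \<in> T}" using clu by blast
          then obtain k where k: "k \<ge> j" "k \<in> {k\<in>S. xn (r k) \<in> T}"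
            using infinite_nat_iff_unbounded_le by blast
          then have "xn (r k) \<in> V j" using r(2)[of k] Vmono[of j k] by blast
          then show "\<exists>z. z \<in> V j \<and> z \<in> T" using k by blast
        qed
        then have "y \<in> weak_star closure_of (W j)" using closure_of_mono[OF VW] by blast
        then show ?thesis using W(3) by blast
      qed
      have ylow: "1 - 1 / real (Suc j) < blinfun_apply y x" for j using yG[of j] unfolding G_def by blast
      have ynK: "y \<notin> K j" for j using yG[of j] unfolding G_def by blast
      have yx_le: "blinfun_apply y x \<le> norm y"
      proof -
        have "blinfun_apply y x \<le> \<bar>blinfun_apply y x\<bar>" by simp
        also have "\<dots> \<le> norm y * norm x" using norm_blinfun[of y x] by simp
        finally show ?thesis using a1 by simp
      qed
      have yx_ge: "blinfun_apply y x \<ge> 1"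
      proof (rule ccontr)
        assume "\<not> 1 \<le> blinfun_apply y x"
        then have "0 < 1 - blinfun_apply y x" by simp
        then obtain j where "inverse (real (Suc j)) < 1 - blinfun_apply y x"
          using reals_Archimedean by blast
        then show False using ylow[of j] by (simp add: field_simps)
      qed
      have "blinfun_apply y x = 1" using yx_le yx_ge y(1) by simp
      moreover have "norm y = 1" using yx_le yx_ge y(1) by simp
      moreover have "y \<noteq> xs" using yO Ob(2) by blast
      ultimately have "y \<in> duality_set x - {xs}" unfolding duality_set_def by simp
      then have "y \<in> (\<Union>n. K n)" using a8 unfolding K_def by simp
      then show False using ynK by blast
    qed
  qed
qed

end
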